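(* Let $n\ge 1$ and let $Y\subseteq\mathbb{S}^{n-1}$ be a finite set with $I(Y)=\{0,\pm\alpha\}$ for some real $\alpha\neq 0$ (so $Y$ is a spherical $3$-distance set). If $|Y|>2n$, then $1/\alpha$ is an integer.
   Context: $\mathbb{S}^{n-1}$ is the unit sphere in $\mathbb{R}^n$. For $Y\subseteq\mathbb{R}^n$, $I(Y)=\{\mathbf{x}\cdot\mathbf{y}:\mathbf{x},\mathbf{y}\in Y,\ \mathbf{x}\neq\mathbf{y}\}$. *)

theory Defs
  imports "HOL-Analysis.Analysis"
begin

definition inner_products :: "'a::real_inner set \<Rightarrow> real set" where
  "inner_products Y = {x \<bullet> y | x y. x \<in> Y \<and> y \<in> Y \<and> x \<noteq> y}"

end

theory Submission imports Defs "Jordan_Normal_Form.Jordan_Normal_Form_Uniqueness" "Jordan_Normal_Form.Jordan_Normal_Form_Existence"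
begin
lemma map_rat_mult: "map_poly (of_rat :: rat \<Rightarrow> 'a::field_char_0) (p*q) = map_poly of_rat p * map_poly of_rat q"
proof -
  interpret map_poly_comm_semiring_hom "of_rat :: rat \<Rightarrow> 'a" ..
  show ?thesis by (rule hom_mult)
qed


lemma int_root_high_order:
  fixes p :: "int poly" and z :: complex
  assumes mon: "monic p" and ord: "2 * Polynomial.order z (of_int_poly p) > degree p"
  shows "z \<in> \<int>"
proof -
  define P :: "rat poly" where "P = of_int_poly p"
  have mapP: "map_poly of_rat P = (of_int_poly p :: complex poly)"
    unfolding P_def by (subst map_poly_map_poly) (auto simp: o_def)
  have p0: "p \<noteq> 0" using mon by auto
  hence P0: "P \<noteq> 0" unfolding P_def by simp
  have p0c: "(of_int_poly p :: complex poly) \<noteq> 0" using p0 by simp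
  have root: "poly (of_int_poly p) z = 0"
    using ord p0c order_root[of "of_int_poly p :: complex poly" z] by auto
  define R where "R = (\<lambda>q::rat poly. q \<noteq> 0 \<and> poly (map_poly of_rat q) z = 0)"
  have RP: "R P" unfolding R_def using P0 root mapP by simp
  obtain q where Rq: "R q" and minq: "\<And>g. R g \<Longrightarrow> degree q \<le> degree g"
    using ex_has_least_nat[of R P degree] RP by blast
  have q0: "q \<noteq> 0" and qz: "poly (map_poly of_rat q) z = 0" using Rq R_def by auto
  have dvdq: "q dvd g" if gz: "poly (map_poly of_rat g) z = 0" for g
  proof (rule ccontr)
    assume nd: "\<not> q dvd g"
    define r where "r = g mod q"
    have r0: "r \<noteq> 0" using nd unfolding r_def by (simp add: mod_eq_0_iff_dvd)
    have ge: "g = g div q * q + r" unfolding r_def by simp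
    have "map_poly of_rat (g div q * q + r) = map_poly of_rat (g div q) * map_poly of_rat q + (map_poly of_rat r :: complex poly)"
      by (simp only: of_rat_hom.map_poly_hom_add map_rat_mult)
    hence "map_poly of_rat g = map_poly of_rat (g div q) * map_poly of_rat q + (map_poly of_rat r :: complex poly)"
      using ge by simp
    hence "poly (map_poly of_rat r) z = 0" using gz qz by (simp)
    hence "R r" using r0 R_def by simp
    moreover have "degree r < degree q" using degree_mod_less[of q g] q0 r0 unfolding r_def by auto
    ultimately show False using minq by fastforce
  qed
  have dq0: "degree q \<noteq> 0"
  proof
    assume "degree q = 0"
    then obtain c where "q = [:c:]" by (metis degree_eq_zeroE)
    thus False using q0 qz by auto
  qed
  have ord1: "Polynomial.order z (map_poly of_rat q) = 1"
  proof -
    have "pderiv q \<noteq> 0" using dq0 by (simp add: pderiv_eq_0_iff)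
    moreover have "degree (pderiv q) < degree q" using dq0 by (simp add: degree_pderiv)
    ultimately have "\<not> R (pderiv q)" using minq by fastforce
    hence "poly (map_poly of_rat (pderiv q)) z \<noteq> 0" using \<open>pderiv q \<noteq> 0\<close> R_def by auto
    hence "poly (pderiv (map_poly of_rat q)) z \<noteq> (0::complex)" by (simp add: of_rat_hom.map_poly_pderiv)
    hence "Polynomial.order z (pderiv (map_poly of_rat q)) = 0" by (simp add: order_root)
    moreover have "map_poly of_rat q \<noteq> (0::complex poly)" using q0 by simp
    ultimately show ?thesis using order_pderiv[of "map_poly of_rat q" z] qz by simp
  qed
  have ind: "\<And>g. g \<noteq> 0 \<Longrightarrow> j \<le> Polynomial.order z (map_poly of_rat g :: complex poly) \<Longrightarrow> q ^ j dvd g" for j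
  proof (induction j)
    case 0 then show ?case by simp
  next
    case (Suc j)
    have gc0: "map_poly of_rat g \<noteq> (0::complex poly)" using Suc.prems by simp
    have "poly (map_poly of_rat g) z = (0::complex)"
      using Suc.prems(2) gc0 order_root by fastforce
    then obtain s where gs: "g = q * s" using dvdq by (meson dvdE)
    have s0: "s \<noteq> 0" using Suc.prems gs by auto
    have "map_poly of_rat g = map_poly of_rat q * (map_poly of_rat s :: complex poly)"
      using gs by (simp only: map_rat_mult)
    hence "Polynomial.order z (map_poly of_rat g :: complex poly) = Polynomial.order z (map_poly of_rat q :: complex poly) + Polynomial.order z (map_poly of_rat s :: complex poly)"
      using gc0 by (simp add: order_mult)
    hence "j \<le> Polynomial.order z (map_poly of_rat s :: complex poly)" using ord1 Suc.prems by simp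
    hence "q ^ j dvd s" using Suc.IH s0 by simp
    thus ?case using gs by simp
  qed
  define k where "k = Polynomial.order z (of_int_poly p :: complex poly)"
  have "q ^ k dvd P" using ind[OF P0, of k] mapP k_def by simp
  hence "degree (q ^ k) \<le> degree P" using P0 by (simp add: dvd_imp_degree_le)
  hence "k * degree q \<le> degree p" unfolding P_def by (simp add: degree_power_eq q0 mult.commute)
  hence dq1: "degree q = 1" using ord dq0 k_def
    by (metis One_nat_def Suc_leI le_antisym le_trans less_2_cases_iff mult_le_mono2 mult.commute not_less)
  have "poly (map_poly of_rat q) z = (\<Sum>i\<le>1. of_rat (coeff q i) * z ^ i)"
    by (simp add: poly_altdef dq1)
  hence eq: "of_rat (coeff q 0) + of_rat (coeff q 1) * z = 0" using qz by simp
  have "coeff q 1 \<noteq> 0" using dq1 q0 by (metis leading_coeff_0_iff)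
  hence "z = of_rat (- coeff q 0 / coeff q 1)" using eq
    by (simp add: of_rat_minus of_rat_divide field_simps) (metis add.commute add_eq_0_iff2 mult.commute)
  hence "z \<in> \<rat>" by simp
  moreover have "algebraic_int z" using algebraic_int_altdef_ipoly mon root by blast
  ultimately show ?thesis using rational_algebraic_int_is_int by blast
qed


lemma sum_list_min1: "sum_list (map (min (1::nat)) xs) \<le> sum_list xs"
  by (induction xs) auto

lemma kernel_dim_lower: assumes V: "V \<in> carrier_mat nr nc"
  shows "nc - nr \<le> kernel_dim (V :: 'a :: field mat)"
proof -
  define G where "G = gauss_jordan_single V"
  from gauss_jordan_single[OF V G_def[symmetric]] have G: "G \<in> carrier_mat nr nc" "row_echelon_form G" by auto
  then obtain pf where pf: "pivot_fun G pf nc" unfolding row_echelon_form_def by auto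
  have "length (pivot_positions G) = card {i. i < nr \<and> row G i \<noteq> 0\<^sub>v nc}"
    using pivot_positions(4)[OF G(1) pf] .
  also have "\<dots> \<le> card {..<nr}" by (rule card_mono) auto
  finally have "length (pivot_positions G) \<le> nr" by simp
  thus ?thesis unfolding kernel_dim_code G_def[symmetric] using V by auto
qed

lemma kernel_dim_mono: assumes V: "V \<in> carrier_mat nr nc" and C: "C \<in> carrier_mat nc2 nc"
  and sub: "mat_kernel V \<subseteq> mat_kernel C"
  shows "kernel_dim (V :: 'a :: field mat) \<le> kernel_dim C"
proof -
  interpret KV: kernel nr nc V by (unfold_locales, rule V)
  interpret KC: kernel nc2 nc C by (unfold_locales, rule C)
  obtain BV where BV: "finite BV" "KV.basis BV" using kernel_basis_exists[OF V] by auto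
  obtain BC where BC: "finite BC" "KC.basis BC" using kernel_basis_exists[OF C] by auto
  have dV: "kernel_dim V = card BV" using KV.Ker.dim_basis[OF BV] by simp
  have BVk: "BV \<subseteq> mat_kernel V" using BV(2) unfolding KV.Ker.basis_def by auto
  hence BVc: "BV \<subseteq> mat_kernel C" using sub by auto
  have "\<not> KV.Ker.lin_dep BV" using BV(2) unfolding KV.Ker.basis_def by auto
  hence "\<not> KV.NC.lin_dep BV" using KV.lindep_same[OF BVk] by simp
  hence li: "\<not> KC.Ker.lin_dep BV" using KC.lindep_same[OF BVc] by simp
  have fd: "KC.Ker.fin_dim" unfolding KC.Ker.fin_dim_def using BC unfolding KC.Ker.basis_def by auto
  have "card BV \<le> KC.Ker.dim" using KC.Ker.li_le_dim(2)[OF fd _ li] BVc by simp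
  thus ?thesis using dV by simp
qed

theorem theorem7p2:
  fixes Y :: "(real ^ 'n) set" and \<alpha> :: real
  assumes "Y \<subseteq> sphere 0 1"
    and "finite Y"
    and "\<alpha> \<noteq> 0"
    and "inner_products Y = {0, \<alpha>, -\<alpha>}"
    and "card Y > 2 * CARD('n)"
  shows "1 / \<alpha> \<in> \<int>"
proof -
  define N where "N = CARD('n)"
  define m where "m = card Y"
  obtain ys where ys: "distinct ys" "set ys = Y" using finite_distinct_list[OF assms(2)] by blast
  have lm: "length ys = m" using distinct_card ys m_def by metis
  obtain f :: "nat \<Rightarrow> 'n" where f: "bij_betw f {0..<N} UNIV"
    using ex_bij_betw_nat_finite[of "UNIV :: 'n set"] unfolding N_def by auto
  have inner: "x \<bullet> y = (\<Sum>l\<in>{0..<N}. x $ f l * y $ f l)" for x y :: "real ^ 'n"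
    unfolding inner_vec_def inner_real_def using sum.reindex_bij_betw[OF f, of "\<lambda>i. x $ i * y $ i"] by simp
  have ysY: "i < m \<Longrightarrow> ys ! i \<in> Y" for i using ys lm by auto
  have norm1: "i < m \<Longrightarrow> ys ! i \<bullet> ys ! i = 1" for i
  proof -
    assume "i < m"
    hence "norm (ys ! i) = 1" using ysY assms(1) by (metis mem_sphere_0 subsetD)
    thus ?thesis by (metis power2_norm_eq_inner power_one)
  qed
  have ip: "i < m \<Longrightarrow> j < m \<Longrightarrow> i \<noteq> j \<Longrightarrow> ys ! i \<bullet> ys ! j \<in> {0, \<alpha>, -\<alpha>}" for i j
  proof -
    assume ij: "i < m" "j < m" "i \<noteq> j"
    hence "ys ! i \<noteq> ys ! j" using ys(1) lm nth_eq_iff_index_eq by metis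
    hence "ys ! i \<bullet> ys ! j \<in> inner_products Y" unfolding inner_products_def using ysY ij by blast
    thus ?thesis using assms(4) by simp
  qed
  define s :: "nat \<Rightarrow> nat \<Rightarrow> int" where "s i j = (if i = j then 0 else if ys!i \<bullet> ys!j = \<alpha> then 1 else if ys!i \<bullet> ys!j = -\<alpha> then -1 else 0)" for i j
  have sa: "i < m \<Longrightarrow> j < m \<Longrightarrow> of_int (s i j) + (if i = j then 1 / \<alpha> else 0) = (ys!i \<bullet> ys!j) / \<alpha>" for i j
    using ip[of i j] norm1[of i] assms(3) unfolding s_def by auto
  define Si :: "int mat" where "Si = mat m m (\<lambda>(i,j). s i j)"
  have Si: "Si \<in> carrier_mat m m" unfolding Si_def by simp
  define Sc :: "complex mat" where "Sc = of_int_hom.mat_hom Si"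
  have Sc: "Sc \<in> carrier_mat m m" unfolding Sc_def using Si by simp
  define z :: complex where "z = - complex_of_real (1 / \<alpha>)"
  define C where "C = char_matrix Sc z"
  have C: "C \<in> carrier_mat m m" unfolding C_def using Sc by simp
  have Cent: "i < m \<Longrightarrow> j < m \<Longrightarrow> C $$ (i,j) = complex_of_real ((ys!i \<bullet> ys!j) / \<alpha>)" for i j
  proof -
    assume ij: "i < m" "j < m"
    have "C $$ (i,j) = of_int (s i j) + (if i = j then complex_of_real (1/\<alpha>) else 0)"
      unfolding C_def char_matrix_def Sc_def Si_def z_def using ij by auto
    also have "\<dots> = complex_of_real (of_int (s i j) + (if i = j then 1 / \<alpha> else 0))" by simp
    also have "\<dots> = complex_of_real ((ys!i \<bullet> ys!j) / \<alpha>)" using sa[OF ij] by simp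
    finally show ?thesis .
  qed
  define V :: "complex mat" where "V = mat N m (\<lambda>(l,j). complex_of_real (ys!j $ f l))"
  have V: "V \<in> carrier_mat N m" unfolding V_def by simp
  have sub: "mat_kernel V \<subseteq> mat_kernel C"
  proof
    fix v assume "v \<in> mat_kernel V"
    hence v: "v \<in> carrier_vec m" "V *\<^sub>v v = 0\<^sub>v N" using mat_kernelD[OF V] by auto
    have Vv: "(\<Sum>j<m. complex_of_real (ys!j $ f l) * v $ j) = 0" if l: "l < N" for l
    proof -
      have "0 = (V *\<^sub>v v) $ l" using v l by simp
      also have "\<dots> = (\<Sum>j\<in>{0..<m}. V $$ (l,j) * v $ j)" using l v(1) V by (simp add: scalar_prod_def)
      also have "\<dots> = (\<Sum>j<m. complex_of_real (ys!j $ f l) * v $ j)"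
        unfolding V_def lessThan_atLeast0 using l by (intro sum.cong) auto
      finally show ?thesis by simp
    qed
    have "C *\<^sub>v v = 0\<^sub>v m"
    proof (rule eq_vecI)
      fix i assume i: "i < dim_vec (0\<^sub>v m :: complex vec)"
      hence i: "i < m" by simp
      have "(C *\<^sub>v v) $ i = (\<Sum>j<m. C $$ (i,j) * v $ j)"
        using i C v by (simp add: scalar_prod_def lessThan_atLeast0)
      also have "\<dots> = (\<Sum>j<m. (\<Sum>l\<in>{0..<N}. complex_of_real (ys!i $ f l) * (complex_of_real (ys!j $ f l) * v $ j)) / complex_of_real \<alpha>)"
      proof (rule sum.cong)
        fix j assume "j \<in> {..<m}"
        hence j: "j < m" by simp
        have aux: "\<And>(a::complex) b c d. a*b/c*d = a*(b*d)/c" by (simp add: divide_inverse mult_ac)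
        show "C $$ (i,j) * v $ j = (\<Sum>l\<in>{0..<N}. complex_of_real (ys!i $ f l) * (complex_of_real (ys!j $ f l) * v $ j)) / complex_of_real \<alpha>"
          by (simp add: Cent[OF i j] inner sum_divide_distrib sum_distrib_right aux mult.assoc)
      qed simp
      also have "\<dots> = (\<Sum>l\<in>{0..<N}. complex_of_real (ys!i $ f l) * (\<Sum>j<m. complex_of_real (ys!j $ f l) * v $ j)) / complex_of_real \<alpha>"
        by (simp add: sum_divide_distrib[symmetric] sum_distrib_left sum.swap[of _ "{..<m}"])
      also have "\<dots> = 0" using Vv by simp
      finally show "(C *\<^sub>v v) $ i = 0\<^sub>v m $ i" using i by simp
    qed (use C in simp)
    thus "v \<in> mat_kernel C" using v C by (simp add: mat_kernel_def)
  qed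
  have kC: "m - N \<le> kernel_dim C"
    using kernel_dim_lower[OF V] kernel_dim_mono[OF V C sub] by simp
  have cp: "char_poly Sc = of_int_poly (char_poly Si)"
    unfolding Sc_def using of_int_hom.char_poly_hom[OF Si] by simp
  obtain as where "char_poly Sc = (\<Prod>a\<leftarrow>as. [:- a, 1:])" using char_poly_factorized[OF Sc] by auto
  then obtain n_as where jnf: "jordan_nf Sc n_as" using jordan_nf_exists[OF Sc] by auto
  have "char_matrix Sc z ^\<^sub>m 1 = C" using C unfolding C_def by simp
  hence "kernel_dim C = dim_gen_eigenspace Sc z 1" unfolding dim_gen_eigenspace_def by simp
  also have "\<dots> = sum_list (map (min 1) (map fst (filter (\<lambda>(n, e). e = z) n_as)))"
    using dim_gen_eigenspace[OF jnf] by simp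
  also have "\<dots> \<le> sum_list (map fst (filter (\<lambda>(n, e). e = z) n_as))" by (rule sum_list_min1)
  also have "(\<lambda>(n::nat, e). e = z) = (\<lambda>na. snd na = z)" by auto
  also have "sum_list (map fst (filter (\<lambda>na. snd na = z) n_as)) = Polynomial.order z (char_poly Sc)"
    using jordan_nf_order[OF jnf] by simp
  finally have ordz: "m - N \<le> Polynomial.order z (of_int_poly (char_poly Si))" using kC cp by simp
  have dm: "degree (char_poly Si) = m" "monic (char_poly Si)" using degree_monic_char_poly[OF Si] by auto
  have "degree (char_poly Si) < 2 * Polynomial.order z (of_int_poly (char_poly Si))"
    using ordz dm assms(5) unfolding m_def N_def by linarith
  hence "z \<in> \<int>" using int_root_high_order dm by blast
  then obtain j where "z = of_int j" by (auto elim: Ints_cases)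
  hence "complex_of_real (1 / \<alpha>) = complex_of_real (of_int (- j))" unfolding z_def
    by (metis minus_minus of_int_minus of_real_of_int_eq)
  hence "1 / \<alpha> = of_int (- j)" using of_real_eq_iff by blast
  thus ?thesis by simp
qed

end
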